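(* Let $R$ be a multiplicative hyperring as in the context and let $I$ be a 1-absorbing prime hyperideal of $R$. Then $\sqrt{I}$ is a prime hyperideal of $R$. Moreover, for every nonunit element $z\in R\setminus I$, the set $(I:z)$ is a prime hyperideal of $R$.
   Context: Throughout, $R$ is a commutative multiplicative hyperring: $(R,+)$ is an abelian group and $\circ:R\times R\to P^*(R)$ (nonempty subsets of $R$) is a commutative, associative hyperoperation with $a\circ(b+c)\subseteq a\circ b+a\circ c$ and $a\circ(-b)=(-a)\circ b=-(a\circ b)$ for all $a,b,c$. For nonempty $A,B\subseteq R$, $A\circ B=\bigcup_{a\in A,b\in B}a\circ b$. $R$ has an identity $1$ (i.e. $a\in a\circ 1$ for all $a$); $x$ is a unit if $1\in x\circ y$ for some $y\in R$. A hyperideal is a nonempty $I\subseteq R$ with $a-b\in I$ and $r\circ a\subseteq I$ for all $a,b\in I$, $r\in R$. All hyperideals are assumed to be $\mathbf{C}$-hyperideals: for every finite product $A=r_1\circ\cdots\circ r_n$, $A\cap I\neq\emptyset$ implies $A\subseteq I$. A prime hyperideal is a proper hyperideal $P$ such that $x\circ y\subseteq P$ implies $x\in P$ or $y\in P$. $\sqrt{I}$ is the intersection of all prime hyperideals containing $I$ (and $R$ if there are none); under the $\mathbf{C}$-hyperideal assumption, $\sqrt{I}=\{r\in R: r^n\subseteq I \text{ for some } n\in\mathbb{N}\}$. For $a\in R$, $(I:a)=\{r\in R: r\circ a\subseteq I\}$. A proper hyperideal $I$ is 1-absorbing prime if for all nonunit $x,y,z\in R$, $x\circ y\circ z\subseteq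 I$ implies $x\circ y\subseteq I$ or $z\in I$. *)

theory Defs
  imports Main
begin

text \<open>A commutative multiplicative hyperring: the additive structure is the
  abelian group structure of the type 'a (carrier = UNIV), the hyperoperation
  is mul :: 'a => 'a => 'a set.\<close>

definition setmul :: "('a \<Rightarrow> 'a \<Rightarrow> 'a set) \<Rightarrow> 'a set \<Rightarrow> 'a set \<Rightarrow> 'a set" where
  "setmul mul A B = (\<Union>a\<in>A. \<Union>b\<in>B. mul a b)"

definition setplus :: "'a::ab_group_add set \<Rightarrow> 'a set \<Rightarrow> 'a set" where
  "setplus A B = {a + b | a b. a \<in> A \<and> b \<in> B}"

definition comm_mult_hyperring :: "('a::ab_group_add \<Rightarrow> 'a \<Rightarrow> 'a set) \<Rightarrow> bool" where
  "comm_mult_hyperring mul \<longleftrightarrow>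
     (\<forall>a b. mul a b \<noteq> {}) \<and>
     (\<forall>a b. mul a b = mul b a) \<and>
     (\<forall>a b c. setmul mul (mul a b) {c} = setmul mul {a} (mul b c)) \<and>
     (\<forall>a b c. mul a (b + c) \<subseteq> setplus (mul a b) (mul a c)) \<and>
     (\<forall>a b. mul a (- b) = uminus ` mul a b \<and> mul (- a) b = uminus ` mul a b)"

definition has_identity :: "('a \<Rightarrow> 'a \<Rightarrow> 'a set) \<Rightarrow> 'a \<Rightarrow> bool" where
  "has_identity mul one \<longleftrightarrow> (\<forall>a. a \<in> mul a one)"

definition hunit :: "('a \<Rightarrow> 'a \<Rightarrow> 'a set) \<Rightarrow> 'a \<Rightarrow> 'a \<Rightarrow> bool" where
  "hunit mul one x \<longleftrightarrow> (\<exists>y. one \<in> mul x y)"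

text \<open>Finite hyperproduct r1 o ... o rn of a nonempty list (empty list: not used).\<close>
fun hprod :: "('a \<Rightarrow> 'a \<Rightarrow> 'a set) \<Rightarrow> 'a list \<Rightarrow> 'a set" where
  "hprod mul [] = {}"
| "hprod mul [r] = {r}"
| "hprod mul (r # rs) = setmul mul {r} (hprod mul rs)"

definition hpow :: "('a \<Rightarrow> 'a \<Rightarrow> 'a set) \<Rightarrow> 'a \<Rightarrow> nat \<Rightarrow> 'a set" where
  "hpow mul r n = hprod mul (replicate n r)"

definition hyperideal :: "('a::ab_group_add \<Rightarrow> 'a \<Rightarrow> 'a set) \<Rightarrow> 'a set \<Rightarrow> bool" where
  "hyperideal mul I \<longleftrightarrow> I \<noteq> {} \<and> (\<forall>a\<in>I. \<forall>b\<in>I. a - b \<in> I) \<and>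
     (\<forall>r a. a \<in> I \<longrightarrow> mul r a \<subseteq> I)"

definition C_hyperideal :: "('a \<Rightarrow> 'a \<Rightarrow> 'a set) \<Rightarrow> 'a set \<Rightarrow> bool" where
  "C_hyperideal mul I \<longleftrightarrow>
     (\<forall>rs. rs \<noteq> [] \<longrightarrow> hprod mul rs \<inter> I \<noteq> {} \<longrightarrow> hprod mul rs \<subseteq> I)"

definition prime_hyperideal :: "('a::ab_group_add \<Rightarrow> 'a \<Rightarrow> 'a set) \<Rightarrow> 'a set \<Rightarrow> bool" where
  "prime_hyperideal mul P \<longleftrightarrow> hyperideal mul P \<and> P \<noteq> UNIV \<and>
     (\<forall>x y. mul x y \<subseteq> P \<longrightarrow> x \<in> P \<or> y \<in> P)"

text \<open>Radical: intersection of all prime hyperideals containing I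
  (Inter of the empty family is UNIV = R).\<close>
definition hrad :: "('a::ab_group_add \<Rightarrow> 'a \<Rightarrow> 'a set) \<Rightarrow> 'a set \<Rightarrow> 'a set" where
  "hrad mul I = \<Inter> {P. prime_hyperideal mul P \<and> I \<subseteq> P}"

definition hcolon :: "('a \<Rightarrow> 'a \<Rightarrow> 'a set) \<Rightarrow> 'a set \<Rightarrow> 'a \<Rightarrow> 'a set" where
  "hcolon mul I a = {r. mul r a \<subseteq> I}"

definition one_absorbing_prime ::
  "('a::ab_group_add \<Rightarrow> 'a \<Rightarrow> 'a set) \<Rightarrow> 'a \<Rightarrow> 'a set \<Rightarrow> bool" where
  "one_absorbing_prime mul one I \<longleftrightarrow> hyperideal mul I \<and> I \<noteq> UNIV \<and>
     (\<forall>x y z. \<not> hunit mul one x \<longrightarrow> \<not> hunit mul one y \<longrightarrow> \<not> hunit mul one z \<longrightarrow>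
        hprod mul [x, y, z] \<subseteq> I \<longrightarrow> hprod mul [x, y] \<subseteq> I \<or> z \<in> I)"

end

theory Submission
  imports Defs
begin

lemma mcomm: "comm_mult_hyperring mul \<Longrightarrow> mul a b = mul b a"
  unfolding comm_mult_hyperring_def by simp

lemma mdist: "comm_mult_hyperring mul \<Longrightarrow> mul a (b + c) \<subseteq> setplus (mul a b) (mul a c)"
  unfolding comm_mult_hyperring_def by simp

lemma mneg: "comm_mult_hyperring mul \<Longrightarrow> mul a (- b) = uminus ` mul a b"
  unfolding comm_mult_hyperring_def by simp

lemma sm_single[simp]: "setmul mul {x} {y} = mul x y"
  by (auto simp: setmul_def)

lemma sm_mono: "A \<subseteq> A' \<Longrightarrow> B \<subseteq> B' \<Longrightarrow> setmul mul A B \<subseteq> setmul mul A' B'"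
  by (auto simp: setmul_def)

lemma sm_comm:
  assumes "comm_mult_hyperring mul" shows "setmul mul A B = setmul mul B A"
proof (rule set_eqI)
  fix x
  show "x \<in> setmul mul A B \<longleftrightarrow> x \<in> setmul mul B A"
    unfolding setmul_def using mcomm[OF assms] by (auto; metis)
qed

lemma sm_assoc1:
  assumes "comm_mult_hyperring mul"
  shows "setmul mul (mul a b) {c} = setmul mul {a} (mul b c)"
  using assms unfolding comm_mult_hyperring_def by simp

lemma sm_ideal:
  assumes "hyperideal mul I" "S \<subseteq> I" shows "setmul mul A S \<subseteq> I"
  using assms unfolding hyperideal_def setmul_def by blast

lemma L_unit:
  assumes H: "comm_mult_hyperring mul" and one: "has_identity mul one"
    and I: "hyperideal mul I" and u: "hunit mul one x" and S: "setmul mul {x} S \<subseteq> I"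
  shows "S \<subseteq> I"
proof
  fix s assume s: "s \<in> S"
  obtain x' where x': "one \<in> mul x x'" using u unfolding hunit_def by blast
  have "s \<in> mul s one" using one unfolding has_identity_def by simp
  then have "s \<in> mul one s" using mcomm[OF H] by metis
  also have "\<dots> \<subseteq> setmul mul (mul x' x) {s}"
  proof -
    have "one \<in> mul x' x" using x' mcomm[OF H] by metis
    then show ?thesis unfolding setmul_def by blast
  qed
  also have "\<dots> = setmul mul {x'} (mul x s)" using sm_assoc1[OF H] .
  also have "\<dots> \<subseteq> I"
  proof (rule sm_ideal[OF I])
    show "mul x s \<subseteq> I" using S s unfolding setmul_def by blast
  qed
  finally show "s \<in> I" .
qed

lemma colon_prime:
  assumes H: "comm_mult_hyperring mul" and one: "has_identity mul one"
    and A: "one_absorbing_prime mul one I" and z: "\<not> hunit mul one z" "z \<notin> I"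
  shows "prime_hyperideal mul (hcolon mul I z)"
proof -
  have I: "hyperideal mul I" using A unfolding one_absorbing_prime_def by blast
  have comm: "\<And>a b. mul a b = mul b a" using mcomm[OF H] by blast
  have sub: "I \<subseteq> hcolon mul I z"
    using I comm unfolding hcolon_def hyperideal_def by blast
  have ne: "hcolon mul I z \<noteq> {}" using sub I unfolding hyperideal_def by blast
  have diff: "\<forall>a\<in>hcolon mul I z. \<forall>b\<in>hcolon mul I z. a - b \<in> hcolon mul I z"
  proof (intro ballI)
    fix a b assume a: "a \<in> hcolon mul I z" and b: "b \<in> hcolon mul I z"
    have "mul (a - b) z = mul z (a + - b)" using comm by simp
    also have "\<dots> \<subseteq> setplus (mul z a) (mul z (- b))"
      using mdist[OF H] by blast
    also have "\<dots> \<subseteq> I"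
    proof
      fix t assume "t \<in> setplus (mul z a) (mul z (- b))"
      then obtain p q where t: "t = p + q" "p \<in> mul z a" "q \<in> mul z (- b)"
        unfolding setplus_def by blast
      have "mul z (- b) = uminus ` mul z b" using mneg[OF H] by blast
      then obtain q' where q': "q = - q'" "q' \<in> mul z b" using t by blast
      have "p \<in> I" "q' \<in> I" using a b t q' comm unfolding hcolon_def by blast+
      then have "p - q' \<in> I" using I unfolding hyperideal_def by blast
      then show "t \<in> I" using t q' by simp
    qed
    finally show "a - b \<in> hcolon mul I z" unfolding hcolon_def by blast
  qed
  have absorb: "\<forall>r a. a \<in> hcolon mul I z \<longrightarrow> mul r a \<subseteq> hcolon mul I z"
  proof (intro allI impI subsetI)
    fix r a t assume a: "a \<in> hcolon mul I z" and t: "t \<in> mul r a"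
    have "mul t z \<subseteq> setmul mul (mul r a) {z}" using t unfolding setmul_def by blast
    also have "\<dots> = setmul mul {r} (mul a z)" using sm_assoc1[OF H] .
    also have "\<dots> \<subseteq> I" using sm_ideal[OF I] a unfolding hcolon_def by blast
    finally show "t \<in> hcolon mul I z" unfolding hcolon_def by blast
  qed
  have proper: "hcolon mul I z \<noteq> UNIV"
  proof
    assume "hcolon mul I z = UNIV"
    then have "mul one z \<subseteq> I" unfolding hcolon_def by blast
    moreover have "z \<in> mul one z" using one comm unfolding has_identity_def by metis
    ultimately show False using z by blast
  qed
  have prime: "\<forall>x y. mul x y \<subseteq> hcolon mul I z \<longrightarrow> x \<in> hcolon mul I z \<or> y \<in> hcolon mul I z"
  proof (intro allI impI)
    fix x y assume xy: "mul x y \<subseteq> hcolon mul I z"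
    have e1: "setmul mul (mul x y) {z} \<subseteq> I" using xy unfolding hcolon_def setmul_def by blast
    then have e2: "setmul mul {x} (mul y z) \<subseteq> I" using sm_assoc1[OF H] by metis
    have "setmul mul {y} (mul x z) = setmul mul {y} (mul z x)" using comm by simp
    also have "\<dots> = setmul mul (mul y z) {x}" using sm_assoc1[OF H] by metis
    also have "\<dots> = setmul mul {x} (mul y z)" using sm_comm[OF H] by metis
    finally have e3: "setmul mul {y} (mul x z) \<subseteq> I" using e2 by simp
    show "x \<in> hcolon mul I z \<or> y \<in> hcolon mul I z"
    proof (cases "hunit mul one x")
      case True
      then have "mul y z \<subseteq> I" using L_unit[OF H one I _ e2] by blast
      then show ?thesis unfolding hcolon_def by blast
    next
      case nx: False
      show ?thesis
      proof (cases "hunit mul one y")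
        case True
        then have "mul x z \<subseteq> I" using L_unit[OF H one I _ e3] by blast
        then show ?thesis unfolding hcolon_def by blast
      next
        case ny: False
        have "hprod mul [x, z, y] = setmul mul {x} (mul z y)" by simp
        also have "\<dots> = setmul mul {x} (mul y z)" using comm by simp
        finally have "hprod mul [x, z, y] \<subseteq> I" using e2 by simp
        then have "hprod mul [x, z] \<subseteq> I \<or> y \<in> I"
          using A nx ny z unfolding one_absorbing_prime_def by blast
        then show ?thesis
        proof
          assume "hprod mul [x, z] \<subseteq> I" then show ?thesis unfolding hcolon_def by simp
        next
          assume "y \<in> I" then show ?thesis using sub by blast
        qed
      qed
    qed
  qed
  show ?thesis unfolding prime_hyperideal_def hyperideal_def
    using ne diff absorb proper prime by blast
qed

theorem mainTheorem1:
  fixes mul :: "'a::ab_group_add \<Rightarrow> 'a \<Rightarrow> 'a set" and one :: 'a and I :: "'a set"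
  assumes "comm_mult_hyperring mul"
    and "has_identity mul one"
    and "\<And>J. hyperideal mul J \<Longrightarrow> C_hyperideal mul J"
    and "one_absorbing_prime mul one I"
  shows "prime_hyperideal mul (hrad mul I) \<and>
         (\<forall>z. \<not> hunit mul one z \<longrightarrow> z \<notin> I \<longrightarrow> prime_hyperideal mul (hcolon mul I z))"
proof -
  note H = assms(1) and one = assms(2) and A = assms(4)
  have I: "hyperideal mul I" using A unfolding one_absorbing_prime_def by blast
  have comm: "\<And>a b. mul a b = mul b a" using mcomm[OF H] by blast
  have P2: "\<forall>z. \<not> hunit mul one z \<longrightarrow> z \<notin> I \<longrightarrow> prime_hyperideal mul (hcolon mul I z)"
    using colon_prime[OF H one A] by blast
  have P1: "prime_hyperideal mul (hrad mul I)"
  proof (cases "prime_hyperideal mul I")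
    case True
    then have "hrad mul I = I" unfolding hrad_def by blast
    then show ?thesis using True by simp
  next
    case False
    then obtain a b where ab: "mul a b \<subseteq> I" "a \<notin> I" "b \<notin> I"
      using A unfolding one_absorbing_prime_def prime_hyperideal_def by blast
    have na: "\<not> hunit mul one a"
    proof
      assume "hunit mul one a"
      then have "{b} \<subseteq> I" using L_unit[OF H one I, of a "{b}"] ab by simp
      then show False using ab by simp
    qed
    have P0: "prime_hyperideal mul (hcolon mul I a)" using P2 na ab by blast
    have sub: "I \<subseteq> hcolon mul I a"
      using I comm unfolding hcolon_def hyperideal_def by blast
    have "hrad mul I = hcolon mul I a"
    proof
      show "hrad mul I \<subseteq> hcolon mul I a" using P0 sub unfolding hrad_def by blast
    next
      show "hcolon mul I a \<subseteq> hrad mul I"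
      proof
        fix c assume c: "c \<in> hcolon mul I a"
        then have ca: "mul c a \<subseteq> I" unfolding hcolon_def by blast
        have nc: "\<not> hunit mul one c"
        proof
          assume "hunit mul one c"
          then have "{a} \<subseteq> I" using L_unit[OF H one I, of c "{a}"] ca by simp
          then show False using ab by simp
        qed
        have "hprod mul [c, c, a] \<subseteq> I" using sm_ideal[OF I ca] by simp
        then have "hprod mul [c, c] \<subseteq> I \<or> a \<in> I"
          using A nc na unfolding one_absorbing_prime_def by blast
        then have cc: "mul c c \<subseteq> I" using ab by simp
        show "c \<in> hrad mul I" unfolding hrad_def
        proof
          fix P assume "P \<in> {P. prime_hyperideal mul P \<and> I \<subseteq> P}"
          then show "c \<in> P" using cc unfolding prime_hyperideal_def by blast
        qed
      qed
    qed
    then show ?thesis using P0 by simp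
  qed
  show ?thesis using P1 P2 by blast
qed

end
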